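(* Let $m\in\mathbb R$ satisfy $D^-M(m)\le0\le D^+M(m)$ and assume the boundedness condition (B) holds with functions $a,b$ whose one-sided limits $a(0+),a(0-),b(0+),b(0-)$ exist and are finite. Assume further there are constants $c>0$, $\delta>0$ with $$|D^+M(m+x)|\ge c\,|x|\qquad\forall x\in[-\delta,\delta].$$ Then for every $\gamma<1/2$ and every $r>0$, $$\sum_{n=1}^\infty n^{r-1}\,\mathbb P\Big(n^\gamma\sup_{k\ge n}|\hat m_k-m|>\epsilon\Big)<\infty\qquad\forall\epsilon>0,$$ i.e. $\sup_{k\ge n}|\hat m_k-m|=o(n^{-\gamma})$ $\mathbb P$-$r$-completely.
   Context: Let $(S,\mathcal S,Q)$ be a probability space and $h:S\times\mathbb R\to\mathbb R$ such that $h(\cdot,t)$ is $\mathcal S$-measurable for every $t\in\mathbb R$ and $h(x,\cdot)$ is convex for every $x\in S$. For $f:\mathbb R\to\mathbb R$ convex, $D^+f$ and $D^-f$ denote its right and left derivatives; $D^\pm h(x,t)$ denotes the one-sided derivatives of $h(x,\cdot)$ at $t$. Assume $\int_S|D^+h(x,t)|\,Q(dx)<\infty$ and $\int_S|D^-h(x,t)|\,Q(dx)<\infty$ for all $t\in\mathbb R$. Fix $t_0\in\mathbb R$ and set $M(t):=\int_S (h(x,t)-h(x,t_0))\,Q(dx)$; $M$ is real-valued and convex with $D^\pm M(t)=\int_S D^\pm h(x,t)\,Q(dx)$. Let $X_1,X_2,\dots$ be i.i.d. $S$-valued random variables on a probability space $(\Omega,\mathcal A,\mathbb P)$ with common law $Q$,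 let $M_n(t):=\frac1n\sum_{i=1}^n (h(X_i,t)-h(X_i,t_0))$, and let $\hat m_n$ be the smallest minimizing point of $M_n$ (assumed to exist; it is a random variable). Boundedness condition (B): for every $x\neq 0$ there are reals $a(x)<b(x)$ with $a(x)\le D^+h(X_1,m+x)\le b(x)$ almost surely. *)

theory Defs
  imports "HOL-Probability.Probability"
begin

definition rderiv :: "(real \<Rightarrow> real) \<Rightarrow> real \<Rightarrow> real" where
  "rderiv f t = Lim (at_right 0) (\<lambda>s. (f (t + s) - f t) / s)"

definition lderiv :: "(real \<Rightarrow> real) \<Rightarrow> real \<Rightarrow> real" where
  "lderiv f t = Lim (at_left 0) (\<lambda>s. (f (t + s) - f t) / s)"

end

theory Submission
  imports Defs "HOL-Real_Asymp.Real_Asymp"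
begin


lemma mono_at_right_lim:
  fixes q :: "real \<Rightarrow> real"
  assumes mono: "\<And>s s'. 0 < s \<Longrightarrow> s \<le> s' \<Longrightarrow> q s \<le> q s'"
    and bdd: "\<And>s. 0 < s \<Longrightarrow> B \<le> q s"
  shows "(q \<longlongrightarrow> Inf (q ` {0<..})) (at_right 0)"
proof (rule order_tendstoI)
  have bb: "bdd_below (q ` {0<..})" using bdd by (auto intro!: bdd_belowI)
  fix y assume "y < Inf (q ` {0<..})"
  then have "\<forall>s>0. y < q s"
    using cInf_lower[OF _ bb] by (meson greaterThan_iff image_eqI less_le_trans)
  then show "eventually (\<lambda>s. y < q s) (at_right 0)"
    by (intro eventually_at_rightI[of 0 1]) auto
next
  fix y assume "Inf (q ` {0<..}) < y"
  then obtain s0 where s0: "s0 > 0" "q s0 < y"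
    using cInf_lessD[of "q ` {0<..}" y] by auto
  show "eventually (\<lambda>s. q s < y) (at_right 0)"
    using s0 mono by (intro eventually_at_rightI[of 0 s0]) (auto, meson le_less_trans less_imp_le)
qed

lemma mono_at_left_lim:
  fixes q :: "real \<Rightarrow> real"
  assumes mono: "\<And>s s'. s \<le> s' \<Longrightarrow> s' < 0 \<Longrightarrow> q s \<le> q s'"
    and bdd: "\<And>s. s < 0 \<Longrightarrow> q s \<le> B"
  shows "(q \<longlongrightarrow> Sup (q ` {..<0})) (at_left 0)"
proof (rule order_tendstoI)
  have bb: "bdd_above (q ` {..<0})" using bdd by (auto intro!: bdd_aboveI)
  fix y assume "Sup (q ` {..<0}) < y"
  then have "\<forall>s<0. q s < y"
    using cSup_upper[OF _ bb] by (meson lessThan_iff image_eqI le_less_trans)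
  then show "eventually (\<lambda>s. q s < y) (at_left 0)"
    by (intro eventually_at_leftI[of "-1" 0]) auto
next
  fix y assume "y < Sup (q ` {..<0})"
  then obtain s0 where s0: "s0 < 0" "y < q s0"
    using less_cSupD[of "q ` {..<0}" y] by auto
  show "eventually (\<lambda>s. y < q s) (at_left 0)"
    using s0 mono by (intro eventually_at_leftI[of s0 0]) (auto intro: less_le_trans)
qed


lemma quot_eq2: "((a::real) - b) / (c - d) = (b - a) / (d - c)"
  by (metis minus_diff_eq minus_divide_divide)

lemma cslope:
  fixes f :: "real \<Rightarrow> real" assumes cv: "convex_on UNIV f" and "x < y" "y < z"
  shows "(f y - f x)/(y-x) \<le> (f z - f x)/(z-x)" "(f z - f x)/(z-x) \<le> (f z - f y)/(z-y)"
proof -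
  have e1: "(f x - f y)/(x-y) = (f y - f x)/(y-x)" by (rule quot_eq2)
  have e2: "(f x - f z)/(x-z) = (f z - f x)/(z-x)" by (rule quot_eq2)
  have e3: "(f y - f z)/(y-z) = (f z - f y)/(z-y)" by (rule quot_eq2)
  show "(f y - f x)/(y-x) \<le> (f z - f x)/(z-x)" "(f z - f x)/(z-x) \<le> (f z - f y)/(z-y)"
    using convex_on_slope_le[OF cv, of x z y] assms e1 e2 e3 by auto
qed

lemma qform: "s \<noteq> 0 \<Longrightarrow> ((f::real\<Rightarrow>real) (t+s) - f t)/s = (f (t+s) - f t)/((t+s) - t)"
  by simp
lemma qform2: "((f::real\<Rightarrow>real) (t+s) - f t)/s = (f t - f (t+s))/(t - (t+s))"
  using quot_eq2[of "f t" "f (t+s)" t "t+s"] by simp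

lemma convex_quot_mono:
  fixes f :: "real \<Rightarrow> real" assumes cv: "convex_on UNIV f"
  shows "s < s' \<Longrightarrow> s \<noteq> 0 \<Longrightarrow> s' \<noteq> 0 \<Longrightarrow> (f (t+s) - f t)/s \<le> (f (t+s') - f t)/s'"
proof -
  assume a: "s < s'" "s \<noteq> 0" "s' \<noteq> 0"
  consider "0 < s" | "s < 0" "0 < s'" | "s' < 0" using a by linarith
  then show ?thesis
  proof cases
    case 1
    have "(f (t+s) - f t)/((t+s) - t) \<le> (f (t+s') - f t)/((t+s') - t)"
      using cslope(1)[OF cv, of t "t+s" "t+s'"] 1 a by auto
    then show ?thesis using 1 a by simp
  next
    case 2
    have "(f t - f (t+s))/(t - (t+s)) \<le> (f (t+s') - f (t+s))/((t+s') - (t+s))"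
      using cslope(1)[OF cv, of "t+s" t "t+s'"] 2 by auto
    moreover have "(f (t+s') - f (t+s))/((t+s') - (t+s)) \<le> (f (t+s') - f t)/((t+s') - t)"
      using cslope(2)[OF cv, of "t+s" t "t+s'"] 2 by auto
    ultimately show ?thesis using 2 a qform2[of f t s] by simp
  next
    case 3
    have "(f t - f (t+s))/(t - (t+s)) \<le> (f t - f (t+s'))/(t - (t+s'))"
      using cslope(2)[OF cv, of "t+s" "t+s'" t] 3 a by auto
    then show ?thesis using qform2[of f t s] qform2[of f t s'] by simp
  qed
qed

lemma convex_rderiv:
  fixes f :: "real \<Rightarrow> real" assumes cv: "convex_on UNIV f"
  shows rderiv_tendsto: "((\<lambda>s. (f (t+s) - f t)/s) \<longlongrightarrow> rderiv f t) (at_right 0)"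
    and rderiv_le_quot: "\<And>s. s > 0 \<Longrightarrow> rderiv f t \<le> (f (t+s) - f t)/s"
    and slope_le_rderiv: "\<And>v. v < t \<Longrightarrow> (f t - f v)/(t - v) \<le> rderiv f t"
proof -
  define q where "q s = (f (t+s) - f t)/s" for s
  have mono: "q s \<le> q s'" if "0 < s" "s \<le> s'" for s s'
    using convex_quot_mono[OF cv, of s s' t] that unfolding q_def
    by (cases "s = s'") auto
  have lb: "(f t - f v)/(t - v) \<le> q s" if "v < t" "0 < s" for v s
  proof -
    have "(f t - f v) / (t - v) \<le> (f (t+s) - f t) / ((t+s) - t)"
      using cslope[OF cv, of v t "t+s"] that by auto
    then show ?thesis using that unfolding q_def by simp
  qed
  have T: "(q \<longlongrightarrow> Inf (q ` {0<..})) (at_right 0)"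
    by (rule mono_at_right_lim[OF mono lb[of "t - 1"]]) auto
  have R: "rderiv f t = Inf (q ` {0<..})"
    unfolding rderiv_def q_def[symmetric] using T by (intro tendsto_Lim) auto
  have bb: "bdd_below (q ` {0<..})" using lb[of "t-1"] by (auto intro!: bdd_belowI)
  show "((\<lambda>s. (f (t+s) - f t)/s) \<longlongrightarrow> rderiv f t) (at_right 0)"
    using T R unfolding q_def by simp
  show "\<And>s. s > 0 \<Longrightarrow> rderiv f t \<le> (f (t+s) - f t)/s"
    unfolding R q_def[symmetric] using bb by (auto intro: cInf_lower)
  show "\<And>v. v < t \<Longrightarrow> (f t - f v)/(t - v) \<le> rderiv f t"
    unfolding R using lb by (auto intro: cInf_greatest)
qed

lemma convex_lderiv_ge_slope:
  fixes f :: "real \<Rightarrow> real" assumes cv: "convex_on UNIV f" and vt: "v < t"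
  shows "(f t - f v)/(t - v) \<le> lderiv f t"
proof -
  define q where "q s = (f (t+s) - f t)/s" for s
  have mono: "q s \<le> q s'" if "s \<le> s'" "s' < 0" for s s'
    using convex_quot_mono[OF cv, of s s' t] that unfolding q_def
    by (cases "s = s'") auto
  have ub: "q s \<le> f (t+1) - f t" if "s < 0" for s
    using convex_quot_mono[OF cv, of s 1 t] that unfolding q_def by auto
  have T: "(q \<longlongrightarrow> Sup (q ` {..<0})) (at_left 0)"
    by (rule mono_at_left_lim[OF mono ub]) auto
  have R: "lderiv f t = Sup (q ` {..<0})"
    unfolding lderiv_def q_def[symmetric] using T by (intro tendsto_Lim) auto
  have bb: "bdd_above (q ` {..<0})" using ub by (auto intro!: bdd_aboveI)
  have "q (v - t) \<le> lderiv f t" unfolding R using bb vt by (auto intro: cSup_upper)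
  moreover have "q (v - t) = (f t - f v)/(t - v)" unfolding q_def using vt
    by (simp add: quot_eq2)
  ultimately show ?thesis by simp
qed

lemma rderiv_le_slope:
  fixes f :: "real \<Rightarrow> real" assumes cv: "convex_on UNIV f" and "t < u"
  shows "rderiv f t \<le> (f u - f t)/(u - t)"
  using rderiv_le_quot[OF cv, of "u - t" t] assms by simp


lemma sum_slope: "finite I \<Longrightarrow> (\<Sum>i\<in>I. ((g i (u::real) - g i v)/(u - v))) = ((\<Sum>i\<in>I. g i u) - (\<Sum>i\<in>I. g i v))/(u - v)"
  by (simp add: sum_divide_distrib[symmetric] sum_subtractf)

lemma argmin_rderiv_nonneg:
  fixes g :: "'i \<Rightarrow> real \<Rightarrow> real"
  assumes fin: "finite I" and cv: "\<And>i. i \<in> I \<Longrightarrow> convex_on UNIV (g i)"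
    and min: "\<And>u. (\<Sum>i\<in>I. g i p) \<le> (\<Sum>i\<in>I. g i u)" and pt: "p \<le> t"
  shows "0 \<le> (\<Sum>i\<in>I. rderiv (g i) t)"
proof (cases "p < t")
  case True
  have "(\<Sum>i\<in>I. ((g i t - g i p)/(t - p))) \<le> (\<Sum>i\<in>I. rderiv (g i) t)"
    by (intro sum_mono slope_le_rderiv[OF cv] True)
  moreover have "0 \<le> (\<Sum>i\<in>I. ((g i t - g i p)/(t - p)))"
    unfolding sum_slope[OF fin] using min[of t] True by simp
  ultimately show ?thesis by linarith
next
  case False
  then have p: "p = t" using pt by simp
  have T: "((\<lambda>s. \<Sum>i\<in>I. (g i (t+s) - g i t)/s) \<longlongrightarrow> (\<Sum>i\<in>I. rderiv (g i) t)) (at_right 0)"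
    by (intro tendsto_sum rderiv_tendsto cv)
  have "eventually (\<lambda>s. 0 \<le> (\<Sum>i\<in>I. (g i (t+s) - g i t)/s)) (at_right 0)"
  proof (rule eventually_at_rightI[of 0 1])
    fix s :: real assume "s \<in> {0<..<1}"
    then have "(\<Sum>i\<in>I. (g i (t+s) - g i t)/s) = ((\<Sum>i\<in>I. g i (t+s)) - (\<Sum>i\<in>I. g i t)) / s"
      by (simp add: sum_divide_distrib[symmetric] sum_subtractf)
    moreover have "(\<Sum>i\<in>I. g i t) \<le> (\<Sum>i\<in>I. g i (t+s))" using min p by simp
    ultimately show "0 \<le> (\<Sum>i\<in>I. (g i (t+s) - g i t)/s)" using \<open>s \<in> _\<close> by simp
  qed simp
  then show ?thesis by (rule tendsto_lowerbound[OF T]) simp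
qed

lemma argmin_rderiv_neg:
  fixes g :: "'i \<Rightarrow> real \<Rightarrow> real"
  assumes fin: "finite I" and cv: "\<And>i. i \<in> I \<Longrightarrow> convex_on UNIV (g i)"
    and min: "\<And>u. (\<Sum>i\<in>I. g i p) \<le> (\<Sum>i\<in>I. g i u)"
    and least: "\<And>u. (\<forall>s. (\<Sum>i\<in>I. g i u) \<le> (\<Sum>i\<in>I. g i s)) \<Longrightarrow> p \<le> u"
    and tp: "t < p"
  shows "(\<Sum>i\<in>I. rderiv (g i) t) < 0"
proof (rule ccontr)
  assume "\<not> ?thesis"
  then have S: "0 \<le> (\<Sum>i\<in>I. rderiv (g i) t)" by simp
  have "(\<Sum>i\<in>I. rderiv (g i) t) \<le> (\<Sum>i\<in>I. ((g i p - g i t)/(p - t)))"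
    by (intro sum_mono rderiv_le_slope[OF cv] tp)
  then have "0 \<le> ((\<Sum>i\<in>I. g i p) - (\<Sum>i\<in>I. g i t))/(p - t)"
    using S unfolding sum_slope[OF fin] by linarith
  then have "(\<Sum>i\<in>I. g i t) \<le> (\<Sum>i\<in>I. g i p)" using tp by (simp add: divide_simps)
  then have "\<forall>s. (\<Sum>i\<in>I. g i t) \<le> (\<Sum>i\<in>I. g i s)" using min by (meson order_trans)
  then have "p \<le> t" by (rule least)
  then show False using tp by simp
qed


lemma summable_powr_exp:
  assumes D: "D > 0" and b: "\<beta> > 0"
  shows "summable (\<lambda>n::nat. real (Suc n) powr \<rho> * exp (-D * real (Suc n) powr \<beta>))"
proof -
  have L: "((\<lambda>x::real. x powr (\<rho> + 2) * exp (-D * x powr \<beta>)) \<longlongrightarrow> 0) at_top"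
    using D b by real_asymp
  have F: "filterlim (\<lambda>n::nat. real (Suc n)) at_top sequentially"
    by (rule filterlim_compose[OF filterlim_real_sequentially filterlim_Suc])
  have "((\<lambda>n::nat. real (Suc n) powr (\<rho> + 2) * exp (-D * real (Suc n) powr \<beta>)) \<longlongrightarrow> 0) sequentially"
    using filterlim_compose[OF L F] by (simp add: o_def)
  then have ev: "eventually (\<lambda>n. real (Suc n) powr (\<rho> + 2) * exp (-D * real (Suc n) powr \<beta>) < 1) sequentially"
    by (rule order_tendstoD) simp
  have S: "summable (\<lambda>n::nat. real (Suc n) powr (-2))"
    using summable_Suc_iff[of "\<lambda>n. real n powr (-2)"] summable_real_powr_iff[of "-2"] by simp
  show ?thesis
  proof (rule summable_comparison_test_ev[OF _ S])
    show "eventually (\<lambda>n. norm (real (Suc n) powr \<rho> * exp (-D * real (Suc n) powr \<beta>)) \<le> real (Suc n) powr (-2)) sequentially"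
      using ev
    proof eventually_elim
      case (elim n)
      have eq: "real (Suc n) powr \<rho> = real (Suc n) powr (\<rho> + 2) * real (Suc n) powr (-2)"
        by (simp add: powr_add[symmetric])
      have "real (Suc n) powr \<rho> * exp (-D * real (Suc n) powr \<beta>)
          = (real (Suc n) powr (\<rho> + 2) * exp (-D * real (Suc n) powr \<beta>)) * real (Suc n) powr (-2)"
        by (subst eq) simp
      also have "\<dots> \<le> 1 * real (Suc n) powr (-2)"
        using elim by (intro mult_right_mono) auto
      finally show ?case by simp
    qed
  qed
qed


locale setting =
  fixes Q :: "'s measure" and P :: "'w measure"
    and h :: "'s \<Rightarrow> real \<Rightarrow> real"
    and t0 :: real
    and X :: "nat \<Rightarrow> 'w \<Rightarrow> 's"
    and mhat :: "nat \<Rightarrow> 'w \<Rightarrow> real"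
    and m c \<delta> :: real
    and a b :: "real \<Rightarrow> real"
  assumes probQ: "prob_space Q"
    and probP: "prob_space P"
    and h_meas: "\<And>t. (\<lambda>x. h x t) \<in> borel_measurable Q"
    and h_convex: "\<And>x. x \<in> space Q \<Longrightarrow> convex_on UNIV (h x)"
    and int_rderiv: "\<And>t. integrable Q (\<lambda>x. rderiv (h x) t)"
    and X_indep: "prob_space.indep_vars P (\<lambda>_. Q) X {1..}"
    and X_law: "\<And>i. i \<ge> 1 \<Longrightarrow> distr P Q (X i) = Q"
    and mhat_min: "\<And>n \<omega> t. n \<ge> 1 \<Longrightarrow> \<omega> \<in> space P \<Longrightarrow>
        (\<Sum>i=1..n. h (X i \<omega>) (mhat n \<omega>) - h (X i \<omega>) t0) / real n
          \<le> (\<Sum>i=1..n. h (X i \<omega>) t - h (X i \<omega>) t0) / real n"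
    and mhat_least: "\<And>n \<omega> t. n \<ge> 1 \<Longrightarrow> \<omega> \<in> space P \<Longrightarrow>
        (\<forall>s. (\<Sum>i=1..n. h (X i \<omega>) t - h (X i \<omega>) t0) / real n
              \<le> (\<Sum>i=1..n. h (X i \<omega>) s - h (X i \<omega>) t0) / real n) \<Longrightarrow> mhat n \<omega> \<le> t"
    and mhat_meas: "\<And>n. n \<ge> 1 \<Longrightarrow> mhat n \<in> borel_measurable P"
    and m_crit: "lderiv (\<lambda>t. \<integral>x. (h x t - h x t0) \<partial>Q) m \<le> 0"
                "0 \<le> rderiv (\<lambda>t. \<integral>x. (h x t - h x t0) \<partial>Q) m"
    and condB: "\<And>x. x \<noteq> 0 \<Longrightarrow> a x < b x \<and>
        (AE \<omega> in P. a x \<le> rderiv (h (X 1 \<omega>)) (m + x) \<and> rderiv (h (X 1 \<omega>)) (m + x) \<le> b x)"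
    and c_pos: "c > 0" and \<delta>_pos: "\<delta> > 0"
    and growth: "\<And>x. x \<in> {-\<delta>..\<delta>} \<Longrightarrow>
        \<bar>rderiv (\<lambda>t. \<integral>y. (h y t - h y t0) \<partial>Q) (m + x)\<bar> \<ge> c * \<bar>x\<bar>"
begin

definition Mf where "Mf t = (\<integral>x. (h x t - h x t0) \<partial>Q)"
definition EY where "EY t = (\<integral>x. rderiv (h x) t \<partial>Q)"

lemma Mf_eta: "(\<lambda>t. \<integral>x. (h x t - h x t0) \<partial>Q) = Mf"
  by (simp add: Mf_def fun_eq_iff)

lemma rd_meas: "(\<lambda>x. rderiv (h x) t) \<in> borel_measurable Q"
  using int_rderiv by auto

lemma int_diff_lt:
  assumes "u < v" shows "integrable Q (\<lambda>x. h x v - h x u)"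
proof (rule Bochner_Integration.integrable_bound[OF _ _ AE_I2])
  show "integrable Q (\<lambda>x. (v - u) * (\<bar>rderiv (h x) u\<bar> + \<bar>rderiv (h x) v\<bar>))"
    using int_rderiv by auto
  show "(\<lambda>x. h x v - h x u) \<in> borel_measurable Q" using h_meas by measurable
  fix x assume x: "x \<in> space Q"
  have l: "rderiv (h x) u \<le> (h x v - h x u)/(v - u)"
    using rderiv_le_slope[OF h_convex[OF x] assms] .
  have r: "(h x v - h x u)/(v - u) \<le> rderiv (h x) v"
    using slope_le_rderiv[OF h_convex[OF x] assms] .
  have "\<bar>(h x v - h x u)/(v - u)\<bar> \<le> \<bar>rderiv (h x) u\<bar> + \<bar>rderiv (h x) v\<bar>"
    using l r by linarith
  then have "\<bar>h x v - h x u\<bar> \<le> (v - u) * (\<bar>rderiv (h x) u\<bar> + \<bar>rderiv (h x) v\<bar>)"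
    using assms by (simp add: abs_divide divide_le_eq mult.commute)
  then show "norm (h x v - h x u) \<le> norm ((v - u) * (\<bar>rderiv (h x) u\<bar> + \<bar>rderiv (h x) v\<bar>))"
    using assms by simp
qed

lemma int_diff: "integrable Q (\<lambda>x. h x v - h x u)"
proof -
  consider "u < v" | "u = v" | "v < u" by linarith
  then show ?thesis
  proof cases
    case 3
    have "integrable Q (\<lambda>x. - (h x u - h x v))" using int_diff_lt[OF 3] by (rule integrable_minus)
    then show ?thesis by simp
  qed (auto intro: int_diff_lt)
qed

lemma Mf_diff: "Mf u - Mf v = (\<integral>x. (h x u - h x v) \<partial>Q)"
proof -
  have "Mf u - Mf v = (\<integral>x. ((h x u - h x t0) - (h x v - h x t0)) \<partial>Q)"
    unfolding Mf_def by (rule Bochner_Integration.integral_diff[symmetric]) (rule int_diff)+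
  then show ?thesis by simp
qed

lemma Mf_convex: "convex_on UNIV Mf"
proof (rule convex_onI)
  fix t x y :: real assume t: "0 < t" "t < 1"
  have "Mf ((1 - t) *\<^sub>R x + t *\<^sub>R y) \<le> (\<integral>z. ((1-t) * (h z x - h z t0) + t * (h z y - h z t0)) \<partial>Q)"
    unfolding Mf_def
  proof (rule integral_mono)
    show "integrable Q (\<lambda>z. h z ((1 - t) *\<^sub>R x + t *\<^sub>R y) - h z t0)" by (rule int_diff)
    show "integrable Q (\<lambda>z. (1-t) * (h z x - h z t0) + t * (h z y - h z t0))"
      using int_diff by auto
    fix z assume z: "z \<in> space Q"
    show "h z ((1 - t) *\<^sub>R x + t *\<^sub>R y) - h z t0 \<le> (1-t) * (h z x - h z t0) + t * (h z y - h z t0)"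
      using convex_onD[OF h_convex[OF z], of t x y] t by (simp add: algebra_simps)
  qed
  also have "\<dots> = (1 - t) * Mf x + t * Mf y"
    unfolding Mf_def using int_diff by simp
  finally show "Mf ((1 - t) *\<^sub>R x + t *\<^sub>R y) \<le> (1 - t) * Mf x + t * Mf y" .
qed simp

lemma E1: assumes "v < u" shows "(Mf u - Mf v)/(u - v) \<le> EY u"
proof -
  have "(Mf u - Mf v)/(u - v) = (\<integral>x. (h x u - h x v)/(u - v) \<partial>Q)"
    unfolding Mf_diff by simp
  also have "\<dots> \<le> EY u" unfolding EY_def
    using int_diff int_rderiv slope_le_rderiv[OF h_convex assms]
    by (intro integral_mono) auto
  finally show ?thesis .
qed

lemma E2: assumes "u < w" shows "EY u \<le> (Mf w - Mf u)/(w - u)"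
proof -
  have "EY u \<le> (\<integral>x. (h x w - h x u)/(w - u) \<partial>Q)" unfolding EY_def
    using int_diff int_rderiv rderiv_le_slope[OF h_convex assms]
    by (intro integral_mono) auto
  also have "\<dots> = (Mf w - Mf u)/(w - u)"
    unfolding Mf_diff by simp
  finally show ?thesis .
qed

lemma EY_pos: assumes "0 < x" "x \<le> \<delta>" shows "c * x / 2 \<le> EY (m + x)"
proof -
  have r0: "0 \<le> rderiv Mf m" using m_crit(2) unfolding Mf_eta .
  have "rderiv Mf m \<le> (Mf (m + x/2) - Mf m)/((m + x/2) - m)"
    using rderiv_le_slope[OF Mf_convex, of m "m + x/2"] assms by simp
  also have "\<dots> \<le> rderiv Mf (m + x/2)"
    using slope_le_rderiv[OF Mf_convex, of m "m + x/2"] assms by simp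
  finally have nn: "0 \<le> rderiv Mf (m + x/2)" using r0 by linarith
  have "c * \<bar>x/2\<bar> \<le> \<bar>rderiv Mf (m + x/2)\<bar>"
    using growth[of "x/2"] assms unfolding Mf_eta by simp
  then have g: "c * x / 2 \<le> rderiv Mf (m + x/2)" using nn assms by simp
  have "rderiv Mf (m + x/2) \<le> (Mf (m + x) - Mf (m + x/2))/((m + x) - (m + x/2))"
    using rderiv_le_slope[OF Mf_convex, of "m + x/2" "m + x"] assms by simp
  also have "\<dots> \<le> EY (m + x)" using E1[of "m + x/2" "m + x"] assms by simp
  finally show ?thesis using g by linarith
qed

lemma EY_neg: assumes "0 < x" "x \<le> \<delta>" shows "EY (m - x) \<le> - (c * x / 2)"
proof -
  have l0: "lderiv Mf m \<le> 0" using m_crit(1) unfolding Mf_eta .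
  have "rderiv Mf (m - x/2) \<le> (Mf m - Mf (m - x/2))/(m - (m - x/2))"
    using rderiv_le_slope[OF Mf_convex, of "m - x/2" m] assms by simp
  also have "\<dots> \<le> lderiv Mf m"
    using convex_lderiv_ge_slope[OF Mf_convex, of "m - x/2" m] assms by simp
  finally have np: "rderiv Mf (m - x/2) \<le> 0" using l0 by linarith
  have "c * \<bar>-x/2\<bar> \<le> \<bar>rderiv Mf (m + -x/2)\<bar>"
    using growth[of "-x/2"] assms unfolding Mf_eta by simp
  then have g: "rderiv Mf (m - x/2) \<le> - (c * x / 2)" using np assms by simp
  have "EY (m - x) \<le> (Mf (m - x/2) - Mf (m - x))/((m - x/2) - (m - x))"
    using E2[of "m - x" "m - x/2"] assms by simp
  also have "\<dots> \<le> rderiv Mf (m - x/2)"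
    using slope_le_rderiv[OF Mf_convex, of "m - x" "m - x/2"] assms by simp
  finally show ?thesis using g by linarith
qed

end

lemma hoeffding_wrap:
  fixes Xs :: "'i \<Rightarrow> 'a \<Rightarrow> real" and a b e :: real
  assumes M: "prob_space M" and fin: "finite I" and ne: "I \<noteq> {}"
    and ind: "prob_space.indep_vars M (\<lambda>_. borel) Xs I"
    and d: "\<And>i. i\<in>I \<Longrightarrow> distr M borel (Xs i) = distr M borel Y"
    and Ym: "Y \<in> borel_measurable M" and AE: "AE x in M. Y x \<in> {a..b}"
    and ab: "a < b" and e: "e \<ge> 0"
  shows "measure M {x\<in>space M. (\<Sum>i\<in>I. Xs i x) / real (card I) \<le> integral\<^sup>L M Y - e}
            \<le> exp (-2 * real (card I) * e\<^sup>2 / (b - a)\<^sup>2)"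
    and "measure M {x\<in>space M. (\<Sum>i\<in>I. Xs i x) / real (card I) \<ge> integral\<^sup>L M Y + e}
            \<le> exp (-2 * real (card I) * e\<^sup>2 / (b - a)\<^sup>2)"
proof -
  interpret iid_interval_bounded_random_variables M I Xs Y a b
    by (rule iid_interval_bounded_random_variables.intro[OF M])
       (rule iid_interval_bounded_random_variables_axioms.intro; fact)
  interpret Hoeffding_ineq_iid M I Xs Y a b "integral\<^sup>L M Y"
    by unfold_locales
  show "measure M {x\<in>space M. (\<Sum>i\<in>I. Xs i x) / real (card I) \<le> integral\<^sup>L M Y - e}
            \<le> exp (-2 * real (card I) * e\<^sup>2 / (b - a)\<^sup>2)"
    using Hoeffding_ineq_le'[OF e ab ne] by simp
  show "measure M {x\<in>space M. (\<Sum>i\<in>I. Xs i x) / real (card I) \<ge> integral\<^sup>L M Y + e}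
            \<le> exp (-2 * real (card I) * e\<^sup>2 / (b - a)\<^sup>2)"
    using Hoeffding_ineq_ge'[OF e ab ne] by simp
qed


context setting begin

lemma Xmeas: "i \<ge> 1 \<Longrightarrow> X i \<in> measurable P Q"
proof -
  have "\<forall>i\<in>{1..}. X i \<in> measurable P Q"
    using X_indep by (simp add: prob_space.indep_vars_def[OF probP])
  then show "i \<ge> 1 \<Longrightarrow> X i \<in> measurable P Q" by auto
qed

lemma Xsp: "i \<ge> 1 \<Longrightarrow> \<omega> \<in> space P \<Longrightarrow> X i \<omega> \<in> space Q"
  by (rule measurable_space[OF Xmeas])

lemma Ymeas: "i \<ge> 1 \<Longrightarrow> (\<lambda>\<omega>. rderiv (h (X i \<omega>)) t) \<in> borel_measurable P"
  using measurable_compose[OF Xmeas rd_meas] by simp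

lemma sum_meas: "(\<lambda>\<omega>. \<Sum>i\<in>{1..k}. rderiv (h (X i \<omega>)) t) \<in> borel_measurable P"
  by (rule borel_measurable_sum, rule Ymeas) simp

lemma hoeff:
  assumes k: "k \<ge> 1" and z: "z \<noteq> 0" and e: "0 \<le> e"
  shows "measure P {\<omega>\<in>space P. (\<Sum>i\<in>{1..k}. rderiv (h (X i \<omega>)) (m+z)) / real k \<le> EY (m+z) - e}
           \<le> exp (-2 * real k * e\<^sup>2 / (b z - a z)\<^sup>2)"
    and "measure P {\<omega>\<in>space P. (\<Sum>i\<in>{1..k}. rderiv (h (X i \<omega>)) (m+z)) / real k \<ge> EY (m+z) + e}
           \<le> exp (-2 * real k * e\<^sup>2 / (b z - a z)\<^sup>2)"
proof -
  interpret P: prob_space P by (rule probP)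
  define g where "g x = rderiv (h x) (m+z)" for x
  define Yi where "Yi i \<omega> = g (X i \<omega>)" for i \<omega>
  define Y where "Y = Yi 1"
  have gm: "g \<in> borel_measurable Q" unfolding g_def by (rule rd_meas)
  have dY: "distr P borel (Yi i) = distr Q borel g" if "i \<ge> 1" for i
  proof -
    have "distr P borel (Yi i) = distr P borel (g \<circ> X i)" unfolding Yi_def by (simp add: o_def)
    also have "\<dots> = distr (distr P Q (X i)) borel g" by (rule distr_distr[symmetric, OF gm Xmeas[OF that]])
    also have "\<dots> = distr Q borel g" by (simp only: X_law[OF that])
    finally show ?thesis .
  qed
  have ab: "a z < b z" and AEb: "AE \<omega> in P. a z \<le> rderiv (h (X 1 \<omega>)) (m + z) \<and> rderiv (h (X 1 \<omega>)) (m + z) \<le> b z"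
    using condB[OF z] by blast+
  have ind: "P.indep_vars (\<lambda>_. borel) Yi {1..k}"
    unfolding Yi_def
    by (rule P.indep_vars_compose2[OF P.indep_vars_subset[OF X_indep]]) (auto intro: gm)
  have dd: "\<And>i. i \<in> {1..k} \<Longrightarrow> distr P borel (Yi i) = distr P borel Y"
  proof -
    fix i assume "i \<in> {1..k}"
    then have "distr P borel (Yi i) = distr Q borel g" by (intro dY) simp
    moreover have "distr P borel Y = distr Q borel g" unfolding Y_def by (intro dY) simp
    ultimately show "distr P borel (Yi i) = distr P borel Y" by simp
  qed
  have Ym: "Y \<in> borel_measurable P" unfolding Y_def Yi_def g_def using Ymeas[of 1] by simp
  have AE: "AE x in P. Y x \<in> {a z..b z}" unfolding Y_def Yi_def g_def
    using AEb by (rule eventually_mono) simp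
  have EYeq: "integral\<^sup>L P Y = EY (m+z)"
  proof -
    have 1: "integral\<^sup>L P Y = integral\<^sup>L (distr P Q (X 1)) g"
      unfolding Y_def Yi_def using integral_distr[OF Xmeas[of 1] gm] by simp
    have 2: "distr P Q (X 1) = Q" by (rule X_law) simp
    show ?thesis using 1 unfolding 2 EY_def g_def .
  qed
  have ne: "{1..k} \<noteq> {}" using k by simp
  note HW = hoeffding_wrap[OF probP finite_atLeastAtMost ne ind dd Ym AE ab e]
  show "measure P {\<omega>\<in>space P. (\<Sum>i\<in>{1..k}. rderiv (h (X i \<omega>)) (m+z)) / real k \<le> EY (m+z) - e}
           \<le> exp (-2 * real k * e\<^sup>2 / (b z - a z)\<^sup>2)"
    using HW(1) unfolding EYeq Yi_def g_def by simp
  show "measure P {\<omega>\<in>space P. (\<Sum>i\<in>{1..k}. rderiv (h (X i \<omega>)) (m+z)) / real k \<ge> EY (m+z) + e}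
           \<le> exp (-2 * real k * e\<^sup>2 / (b z - a z)\<^sup>2)"
    using HW(2) unfolding EYeq Yi_def g_def by simp
qed

end


context setting begin

lemma avg_iff:
  fixes f g w :: "nat \<Rightarrow> real"
  assumes "k \<ge> 1"
  shows "((\<Sum>i=1..k. f i - w i) / real k \<le> (\<Sum>i=1..k. g i - w i) / real k) \<longleftrightarrow>
         (\<Sum>i=1..k. f i) \<le> (\<Sum>i=1..k. g i)"
  using assms by (simp add: sum_subtractf divide_le_cancel)

lemma min_conv:
  assumes "k \<ge> 1" "\<omega> \<in> space P"
  shows "(\<Sum>i=1..k. h (X i \<omega>) (mhat k \<omega>)) \<le> (\<Sum>i=1..k. h (X i \<omega>) u)"
  using mhat_min[OF assms, of u] avg_iff[OF assms(1), of "\<lambda>i. h (X i \<omega>) (mhat k \<omega>)" "\<lambda>i. h (X i \<omega>) t0" "\<lambda>i. h (X i \<omega>) u"]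
  by simp

lemma least_conv:
  assumes "k \<ge> 1" "\<omega> \<in> space P" "\<forall>s. (\<Sum>i=1..k. h (X i \<omega>) u) \<le> (\<Sum>i=1..k. h (X i \<omega>) s)"
  shows "mhat k \<omega> \<le> u"
proof (rule mhat_least[OF assms(1,2)], intro allI)
  fix s show "(\<Sum>i = 1..k. h (X i \<omega>) u - h (X i \<omega>) t0) / real k \<le> (\<Sum>i = 1..k. h (X i \<omega>) s - h (X i \<omega>) t0) / real k"
    using assms(3) avg_iff[OF assms(1), of "\<lambda>i. h (X i \<omega>) u" "\<lambda>i. h (X i \<omega>) t0" "\<lambda>i. h (X i \<omega>) s"]
    by simp
qed

lemma cvx_X: "k \<ge> 1 \<Longrightarrow> \<omega> \<in> space P \<Longrightarrow> i \<in> {1..k} \<Longrightarrow> convex_on UNIV (h (X i \<omega>))"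
  by (rule h_convex, rule Xsp) auto

lemma exp_cmp:
  fixes k :: nat and E d L y :: real
  assumes "0 < y" "y \<le> E" "0 < d" "d \<le> L"
  shows "exp (-2 * real k * E\<^sup>2 / d\<^sup>2) \<le> exp (-2 * real k * y\<^sup>2 / L\<^sup>2)"
proof -
  have "y\<^sup>2 \<le> E\<^sup>2" using assms by (intro power_mono) auto
  moreover have "d\<^sup>2 \<le> L\<^sup>2" using assms by (intro power_mono) auto
  ultimately have "2 * real k * y\<^sup>2 / L\<^sup>2 \<le> 2 * real k * E\<^sup>2 / d\<^sup>2"
    using assms by (intro frac_le mult_left_mono) auto
  then show ?thesis by simp
qed

lemma tail_right:
  assumes k: "k \<ge> 1" and x: "0 < x" "x \<le> \<delta>" and L: "b x - a x \<le> L"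
  shows "measure P {\<omega>\<in>space P. m + x < mhat k \<omega>} \<le> exp (-2 * real k * (c * x / 2)\<^sup>2 / L\<^sup>2)"
proof -
  interpret P: prob_space P by (rule probP)
  define S where "S \<omega> = (\<Sum>i\<in>{1..k}. rderiv (h (X i \<omega>)) (m+x))" for \<omega>
  have Sm[measurable]: "S \<in> borel_measurable P" unfolding S_def by (rule sum_meas)
  have sub: "{\<omega>\<in>space P. m + x < mhat k \<omega>} \<subseteq> {\<omega>\<in>space P. S \<omega> / real k \<le> EY (m+x) - EY (m+x)}"
  proof safe
    fix \<omega> assume w: "\<omega> \<in> space P" "m + x < mhat k \<omega>"
    have "S \<omega> < 0" unfolding S_def
      by (rule argmin_rderiv_neg[OF finite_atLeastAtMost cvx_X[OF k w(1)] min_conv[OF k w(1)] least_conv[OF k w(1)]])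
         (use w in simp_all)
    then show "S \<omega> / real k \<le> EY (m+x) - EY (m+x)" using k by (simp add: divide_nonpos_pos)
  qed
  have ab: "a x < b x" using condB[of x] x by auto
  have EYp: "c * x / 2 \<le> EY (m + x)" by (rule EY_pos[OF x])
  have "measure P {\<omega>\<in>space P. m + x < mhat k \<omega>} \<le> measure P {\<omega>\<in>space P. S \<omega> / real k \<le> EY (m+x) - EY (m+x)}"
    by (rule P.finite_measure_mono[OF sub]) measurable
  also have "\<dots> \<le> exp (-2 * real k * (EY (m+x))\<^sup>2 / (b x - a x)\<^sup>2)"
  proof -
    have "0 < c * x" using c_pos x by simp
    then have e0: "0 \<le> EY (m+x)" using EYp by linarith
    have xn: "x \<noteq> 0" using x by simp
    show ?thesis using hoeff(1)[OF k xn e0] unfolding S_def by simp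
  qed
  also have "\<dots> \<le> exp (-2 * real k * (c * x / 2)\<^sup>2 / L\<^sup>2)"
    by (rule exp_cmp) (use x c_pos EYp ab L in auto)
  finally show ?thesis .
qed

lemma tail_left:
  assumes k: "k \<ge> 1" and x: "0 < x" "x \<le> \<delta>" and L: "b (-x) - a (-x) \<le> L"
  shows "measure P {\<omega>\<in>space P. mhat k \<omega> < m - x} \<le> exp (-2 * real k * (c * x / 2)\<^sup>2 / L\<^sup>2)"
proof -
  interpret P: prob_space P by (rule probP)
  define S where "S \<omega> = (\<Sum>i\<in>{1..k}. rderiv (h (X i \<omega>)) (m + -x))" for \<omega>
  have Sm[measurable]: "S \<in> borel_measurable P" unfolding S_def by (rule sum_meas)
  have sub: "{\<omega>\<in>space P. mhat k \<omega> < m - x} \<subseteq> {\<omega>\<in>space P. EY (m + -x) + - EY (m + -x) \<le> S \<omega> / real k}"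
  proof safe
    fix \<omega> assume w: "\<omega> \<in> space P" "mhat k \<omega> < m - x"
    have "0 \<le> S \<omega>" unfolding S_def
      by (rule argmin_rderiv_nonneg[OF finite_atLeastAtMost cvx_X[OF k w(1)] min_conv[OF k w(1)]])
         (use w in simp_all)
    then show "EY (m + -x) + - EY (m + -x) \<le> S \<omega> / real k" by simp
  qed
  have ab: "a (-x) < b (-x)" using condB[of "-x"] x by auto
  have EYn: "c * x / 2 \<le> - EY (m + -x)" using EY_neg[OF x] by simp
  have "measure P {\<omega>\<in>space P. mhat k \<omega> < m - x} \<le> measure P {\<omega>\<in>space P. EY (m + -x) + - EY (m + -x) \<le> S \<omega> / real k}"
    by (rule P.finite_measure_mono[OF sub]) measurable
  also have "\<dots> \<le> exp (-2 * real k * (- EY (m + -x))\<^sup>2 / (b (-x) - a (-x))\<^sup>2)"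
  proof -
    have "0 < c * x" using c_pos x by simp
    then have e0: "0 \<le> - EY (m + -x)" using EYn by linarith
    have xn: "-x \<noteq> 0" using x by simp
    show ?thesis using hoeff(2)[OF k xn e0] unfolding S_def by simp
  qed
  also have "\<dots> \<le> exp (-2 * real k * (c * x / 2)\<^sup>2 / L\<^sup>2)"
    by (rule exp_cmp) (use x c_pos EYn ab L in auto)
  finally show ?thesis .
qed

lemma tail_abs:
  assumes k: "k \<ge> 1" and x: "0 < x" "x \<le> \<delta>" and L: "b x - a x \<le> L" "b (-x) - a (-x) \<le> L"
  shows "measure P {\<omega>\<in>space P. x < \<bar>mhat k \<omega> - m\<bar>} \<le> 2 * exp (-2 * real k * (c * x / 2)\<^sup>2 / L\<^sup>2)"
proof -
  interpret P: prob_space P by (rule probP)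
  have mm[measurable]: "mhat k \<in> borel_measurable P" by (rule mhat_meas[OF k])
  have "measure P {\<omega>\<in>space P. x < \<bar>mhat k \<omega> - m\<bar>}
      \<le> measure P ({\<omega>\<in>space P. m + x < mhat k \<omega>} \<union> {\<omega>\<in>space P. mhat k \<omega> < m - x})"
  proof (rule P.finite_measure_mono)
    show "{\<omega>\<in>space P. x < \<bar>mhat k \<omega> - m\<bar>} \<subseteq> {\<omega>\<in>space P. m + x < mhat k \<omega>} \<union> {\<omega>\<in>space P. mhat k \<omega> < m - x}"
      by (auto simp: abs_if split: if_splits)
  qed measurable
  also have "\<dots> \<le> measure P {\<omega>\<in>space P. m + x < mhat k \<omega>} + measure P {\<omega>\<in>space P. mhat k \<omega> < m - x}"
    by (rule measure_Un_le) measurable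
  also have "\<dots> \<le> 2 * exp (-2 * real k * (c * x / 2)\<^sup>2 / L\<^sup>2)"
    using tail_right[OF k x L(1)] tail_left[OF k x L(2)] by simp
  finally show ?thesis .
qed

end


context setting begin

lemma ab_bound:
  assumes a_lim: "\<exists>L. (a \<longlongrightarrow> L) (at_right 0)" "\<exists>L. (a \<longlongrightarrow> L) (at_left 0)"
    and b_lim: "\<exists>L. (b \<longlongrightarrow> L) (at_right 0)" "\<exists>L. (b \<longlongrightarrow> L) (at_left 0)"
  shows "\<exists>\<eta> L. \<eta> > 0 \<and> L > 0 \<and> (\<forall>z. 0 < z \<longrightarrow> z \<le> \<eta> \<longrightarrow> b z - a z \<le> L \<and> b (-z) - a (-z) \<le> L)"
proof -
  obtain A1 B1 where A1: "(a \<longlongrightarrow> A1) (at_right 0)" and B1: "(b \<longlongrightarrow> B1) (at_right 0)"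
    using a_lim(1) b_lim(1) by blast
  obtain A2 B2 where A2: "(a \<longlongrightarrow> A2) (at_left 0)" and B2: "(b \<longlongrightarrow> B2) (at_left 0)"
    using a_lim(2) b_lim(2) by blast
  have "eventually (\<lambda>z. b z - a z < B1 - A1 + 1) (at_right 0)"
    by (rule order_tendstoD(2)[OF tendsto_diff[OF B1 A1]]) simp
  then obtain e1 where e1: "e1 > 0" "\<And>y. y > 0 \<Longrightarrow> y < e1 \<Longrightarrow> b y - a y < B1 - A1 + 1"
    unfolding eventually_at_right_field by auto
  have "eventually (\<lambda>z. b z - a z < B2 - A2 + 1) (at_left 0)"
    by (rule order_tendstoD(2)[OF tendsto_diff[OF B2 A2]]) simp
  then obtain e2 where e2: "e2 < 0" "\<And>y. y > e2 \<Longrightarrow> y < 0 \<Longrightarrow> b y - a y < B2 - A2 + 1"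
    unfolding eventually_at_left_field by auto
  define \<eta> where "\<eta> = min e1 (-e2) / 2"
  define L where "L = max (max (B1 - A1 + 1) (B2 - A2 + 1)) 1"
  show ?thesis
  proof (intro exI conjI allI impI)
    show "\<eta> > 0" using e1 e2 by (simp add: \<eta>_def)
    show "L > 0" by (simp add: L_def)
    fix z :: real assume z: "0 < z" "z \<le> \<eta>"
    have "b z - a z < B1 - A1 + 1" using e1(2)[of z] z e1 e2 by (simp add: \<eta>_def)
    then show "b z - a z \<le> L" by (simp add: L_def)
    have "b (-z) - a (-z) < B2 - A2 + 1" using e2(2)[of "-z"] z e1 e2 by (simp add: \<eta>_def)
    then show "b (-z) - a (-z) \<le> L" by (simp add: L_def)
  qed
qed

lemma powr_stuff:
  fixes k :: nat and g \<theta> :: real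
  assumes "k \<ge> 1"
  shows "real k * (\<theta> * real k powr (-g))\<^sup>2 = \<theta>\<^sup>2 * real k powr (1 - 2 * g)"
proof -
  have kp: "real k > 0" using assms by simp
  have "real k * (\<theta> * real k powr (-g))\<^sup>2 = \<theta>\<^sup>2 * (real k powr 1 * real k powr (-g) * real k powr (-g))"
    using kp by (simp add: power2_eq_square)
  also have "real k powr 1 * real k powr (-g) * real k powr (-g) = real k powr (1 + (-g) + (-g))"
    by (simp only: powr_add)
  also have "(1 + (-g) + (-g)) = 1 - 2 * g" by simp
  finally show ?thesis .
qed

lemma PB:
  assumes \<eta>: "\<eta> > 0" and L: "L > 0"
    and ab: "\<And>z. 0 < z \<Longrightarrow> z \<le> \<eta> \<Longrightarrow> b z - a z \<le> L \<and> b (-z) - a (-z) \<le> L"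
    and \<theta>: "0 < \<theta>" "\<theta> \<le> \<delta>" "\<theta> \<le> \<eta>" and g: "0 \<le> g" and k: "k \<ge> 1"
  shows "measure P {\<omega>\<in>space P. \<theta> * real k powr (-g) < \<bar>mhat k \<omega> - m\<bar>}
           \<le> 2 * exp (- (2 * (c * \<theta> / 2)\<^sup>2 / L\<^sup>2) * real k powr (1 - 2 * g))"
proof -
  define x where "x = \<theta> * real k powr (-g)"
  have kg: "1 \<le> real k powr g" using k g by (intro ge_one_powr_ge_zero) auto
  have x0: "0 < x" unfolding x_def using \<theta> k by simp
  have "1 / real k powr g \<le> 1" using kg by (simp add: divide_le_eq)
  then have "real k powr (-g) \<le> 1" by (simp add: powr_minus_divide)
  then have xt: "x \<le> \<theta>" unfolding x_def using \<theta> by (simp add: mult_left_le)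
  have "measure P {\<omega>\<in>space P. x < \<bar>mhat k \<omega> - m\<bar>} \<le> 2 * exp (-2 * real k * (c * x / 2)\<^sup>2 / L\<^sup>2)"
    using tail_abs[OF k x0 _ conjunct1[OF ab] conjunct2[OF ab]] x0 xt \<theta> by simp
  also have "-2 * real k * (c * x / 2)\<^sup>2 / L\<^sup>2 = - (2 * (c / 2)\<^sup>2 / L\<^sup>2) * (real k * x\<^sup>2)"
    by (simp add: power_mult_distrib field_simps)
  also have "real k * x\<^sup>2 = \<theta>\<^sup>2 * real k powr (1 - 2 * g)"
    unfolding x_def by (rule powr_stuff[OF k])
  also have "- (2 * (c / 2)\<^sup>2 / L\<^sup>2) * (\<theta>\<^sup>2 * real k powr (1 - 2 * g)) = - (2 * (c * \<theta> / 2)\<^sup>2 / L\<^sup>2) * real k powr (1 - 2 * g)"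
    by (simp add: power_mult_distrib field_simps)
  finally show ?thesis unfolding x_def .
qed

lemma exp_split:
  fixes D \<beta> :: real and j n :: nat
  assumes "D > 0" "\<beta> > 0"
  shows "exp (- D * real (j + Suc n) powr \<beta>)
     \<le> exp (- (D/2) * real (Suc n) powr \<beta>) * exp (- (D/2) * real (Suc j) powr \<beta>)"
proof -
  have 1: "real (Suc n) powr \<beta> \<le> real (j + Suc n) powr \<beta>" using assms by (intro powr_mono2) auto
  have 2: "real (Suc j) powr \<beta> \<le> real (j + Suc n) powr \<beta>" using assms by (intro powr_mono2) auto
  have "(D/2) * real (Suc n) powr \<beta> + (D/2) * real (Suc j) powr \<beta> \<le> D * real (j + Suc n) powr \<beta>"
  proof -
    have "(D/2) * real (Suc n) powr \<beta> \<le> (D/2) * real (j + Suc n) powr \<beta>"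
      using 1 assms by (intro mult_left_mono) auto
    moreover have "(D/2) * real (Suc j) powr \<beta> \<le> (D/2) * real (j + Suc n) powr \<beta>"
      using 2 assms by (intro mult_left_mono) auto
    ultimately show ?thesis by linarith
  qed
  then show ?thesis by (simp add: exp_add[symmetric])
qed

lemma main_sum:
  assumes \<eta>: "\<eta> > 0" and L: "L > 0"
    and ab: "\<And>z. 0 < z \<Longrightarrow> z \<le> \<eta> \<Longrightarrow> b z - a z \<le> L \<and> b (-z) - a (-z) \<le> L"
    and \<gamma>: "\<gamma> < 1/2" and \<epsilon>: "\<epsilon> > 0"
  shows "summable (\<lambda>n::nat. real (Suc n) powr (r - 1) *
        measure P {\<omega> \<in> space P.
           (SUP k\<in>{Suc n..}. ereal (real (Suc n) powr \<gamma> * \<bar>mhat k \<omega> - m\<bar>)) > ereal \<epsilon>})"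
proof -
  interpret P: prob_space P by (rule probP)
  define g where "g = max \<gamma> 0"
  define \<beta> where "\<beta> = 1 - 2 * g"
  define \<theta> where "\<theta> = min \<epsilon> (min \<delta> \<eta>)"
  define D where "D = 2 * (c * \<theta> / 2)\<^sup>2 / L\<^sup>2"
  have g0: "0 \<le> g" and \<gamma>g: "\<gamma> \<le> g" by (auto simp: g_def)
  have \<beta>0: "\<beta> > 0" using \<gamma> by (simp add: \<beta>_def g_def)
  have \<theta>: "0 < \<theta>" "\<theta> \<le> \<delta>" "\<theta> \<le> \<eta>" "\<theta> \<le> \<epsilon>" using \<eta> \<epsilon> \<delta>_pos by (auto simp: \<theta>_def)
  have D0: "D > 0" using c_pos \<theta> L by (simp add: D_def)
  define A where "A k = {\<omega>\<in>space P. \<theta> * real k powr (-g) < \<bar>mhat k \<omega> - m\<bar>}" for k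
  have Ameas: "A k \<in> sets P" if "k \<ge> 1" for k
  proof -
    have [measurable]: "mhat k \<in> borel_measurable P" by (rule mhat_meas[OF that])
    show ?thesis unfolding A_def by measurable
  qed
  have PBk: "measure P (A k) \<le> 2 * exp (- D * real k powr \<beta>)" if "k \<ge> 1" for k
    unfolding A_def D_def \<beta>_def using PB[OF \<eta> L ab \<theta>(1-3) g0 that] by simp
  define w where "w j = exp (- (D/2) * real (Suc j) powr \<beta>)" for j :: nat
  have sw: "summable w"
    using summable_powr_exp[of "D/2" \<beta> 0] D0 \<beta>0 unfolding w_def by simp
  define S where "S = suminf w"
  have S0: "0 \<le> S" unfolding S_def w_def by (intro suminf_nonneg sw[unfolded w_def]) simp
  define E where "E n = {\<omega> \<in> space P.
           (SUP k\<in>{Suc n..}. ereal (real (Suc n) powr \<gamma> * \<bar>mhat k \<omega> - m\<bar>)) > ereal \<epsilon>}" for n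
  have bound: "measure P (E n) \<le> 2 * S * exp (- (D/2) * real (Suc n) powr \<beta>)" for n
  proof -
    have sub: "E n \<subseteq> (\<Union>j. A (j + Suc n))"
    proof
      fix \<omega> assume "\<omega> \<in> E n"
      then have w: "\<omega> \<in> space P" and "\<exists>k\<in>{Suc n..}. ereal \<epsilon> < ereal (real (Suc n) powr \<gamma> * \<bar>mhat k \<omega> - m\<bar>)"
        unfolding E_def less_SUP_iff by auto
      then obtain k where k: "k \<ge> Suc n" and lt: "\<epsilon> < real (Suc n) powr \<gamma> * \<bar>mhat k \<omega> - m\<bar>" by auto
      have "real (Suc n) powr \<gamma> \<le> real (Suc n) powr g" using \<gamma>g by (intro powr_mono) auto
      also have "\<dots> \<le> real k powr g" using k g0 by (intro powr_mono2) auto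
      finally have "real (Suc n) powr \<gamma> * \<bar>mhat k \<omega> - m\<bar> \<le> real k powr g * \<bar>mhat k \<omega> - m\<bar>"
        by (intro mult_right_mono) auto
      then have "\<theta> < real k powr g * \<bar>mhat k \<omega> - m\<bar>" using lt \<theta>(4) by linarith
      moreover have kp: "real k powr g > 0" using k by simp
      ultimately have "\<theta> * real k powr (-g) < \<bar>mhat k \<omega> - m\<bar>"
        by (simp add: powr_minus_divide divide_less_eq mult.commute)
      then have "\<omega> \<in> A k" unfolding A_def using w by simp
      moreover have "k = (k - Suc n) + Suc n" using k by simp
      ultimately show "\<omega> \<in> (\<Union>j. A (j + Suc n))" by (metis UNIV_I UN_iff)
    qed
    have sets: "range (\<lambda>j. A (j + Suc n)) \<subseteq> sets P" using Ameas by auto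
    have bj: "measure P (A (j + Suc n)) \<le> 2 * exp (- (D/2) * real (Suc n) powr \<beta>) * w j" for j
      using PBk[of "j + Suc n"] exp_split[OF D0 \<beta>0, of j n] unfolding w_def by simp
    have s2: "summable (\<lambda>j. 2 * exp (- (D/2) * real (Suc n) powr \<beta>) * w j)"
      by (intro summable_mult sw)
    have s1: "summable (\<lambda>j. measure P (A (j + Suc n)))"
      by (rule summable_comparison_test[OF _ s2]) (use bj in auto)
    have "measure P (E n) \<le> measure P (\<Union>j. A (j + Suc n))"
      by (rule P.finite_measure_mono[OF sub]) (use sets in auto)
    also have "\<dots> \<le> (\<Sum>j. measure P (A (j + Suc n)))"
      by (rule P.finite_measure_subadditive_countably[OF sets s1])
    also have "\<dots> \<le> (\<Sum>j. 2 * exp (- (D/2) * real (Suc n) powr \<beta>) * w j)"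
      by (rule suminf_le[OF bj s1 s2])
    also have "\<dots> = 2 * exp (- (D/2) * real (Suc n) powr \<beta>) * S"
      unfolding S_def by (rule suminf_mult[OF sw])
    finally show ?thesis by (simp add: mult_ac)
  qed
  have sfin: "summable (\<lambda>n. real (Suc n) powr (r - 1) * exp (- (D/2) * real (Suc n) powr \<beta>))"
    using summable_powr_exp[of "D/2" \<beta> "r - 1"] D0 \<beta>0 by simp
  show ?thesis
  proof (rule summable_comparison_test[OF _ summable_mult[OF sfin, of "2 * S"]])
    show "\<exists>N. \<forall>n\<ge>N. norm (real (Suc n) powr (r - 1) * measure P {\<omega> \<in> space P.
           (SUP k\<in>{Suc n..}. ereal (real (Suc n) powr \<gamma> * \<bar>mhat k \<omega> - m\<bar>)) > ereal \<epsilon>})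
        \<le> 2 * S * (real (Suc n) powr (r - 1) * exp (- (D/2) * real (Suc n) powr \<beta>))"
    proof (intro exI allI impI)
      fix n :: nat
      have "measure P (E n) \<le> 2 * S * exp (- (D/2) * real (Suc n) powr \<beta>)" using bound[of n] .
      then have "real (Suc n) powr (r - 1) * measure P (E n) \<le> real (Suc n) powr (r - 1) * (2 * S * exp (- (D/2) * real (Suc n) powr \<beta>))"
        by (intro mult_left_mono) auto
      then show "norm (real (Suc n) powr (r - 1) * measure P {\<omega> \<in> space P.
           (SUP k\<in>{Suc n..}. ereal (real (Suc n) powr \<gamma> * \<bar>mhat k \<omega> - m\<bar>)) > ereal \<epsilon>})
        \<le> 2 * S * (real (Suc n) powr (r - 1) * exp (- (D/2) * real (Suc n) powr \<beta>))"
        unfolding E_def by (simp add: mult_ac)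
    qed
  qed
qed

end

theorem corollary1:
  fixes Q :: "'s measure" and P :: "'w measure"
    and h :: "'s \<Rightarrow> real \<Rightarrow> real"
    and t0 :: real
    and X :: "nat \<Rightarrow> 'w \<Rightarrow> 's"
    and mhat :: "nat \<Rightarrow> 'w \<Rightarrow> real"
    and m c \<delta> :: real
    and a b :: "real \<Rightarrow> real"
  assumes probQ: "prob_space Q"
    and probP: "prob_space P"
    and h_meas: "\<And>t. (\<lambda>x. h x t) \<in> borel_measurable Q"
    and h_convex: "\<And>x. x \<in> space Q \<Longrightarrow> convex_on UNIV (h x)"
    and int_rderiv: "\<And>t. integrable Q (\<lambda>x. rderiv (h x) t)"
    and int_lderiv: "\<And>t. integrable Q (\<lambda>x. lderiv (h x) t)"
    and X_indep: "prob_space.indep_vars P (\<lambda>_. Q) X {1..}"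
    and X_law: "\<And>i. i \<ge> 1 \<Longrightarrow> distr P Q (X i) = Q"
    and mhat_min: "\<And>n \<omega> t. n \<ge> 1 \<Longrightarrow> \<omega> \<in> space P \<Longrightarrow>
        (\<Sum>i=1..n. h (X i \<omega>) (mhat n \<omega>) - h (X i \<omega>) t0) / real n
          \<le> (\<Sum>i=1..n. h (X i \<omega>) t - h (X i \<omega>) t0) / real n"
    and mhat_least: "\<And>n \<omega> t. n \<ge> 1 \<Longrightarrow> \<omega> \<in> space P \<Longrightarrow>
        (\<forall>s. (\<Sum>i=1..n. h (X i \<omega>) t - h (X i \<omega>) t0) / real n
              \<le> (\<Sum>i=1..n. h (X i \<omega>) s - h (X i \<omega>) t0) / real n) \<Longrightarrow> mhat n \<omega> \<le> t"
    and mhat_meas: "\<And>n. n \<ge> 1 \<Longrightarrow> mhat n \<in> borel_measurable P"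
    and m_crit: "lderiv (\<lambda>t. \<integral>x. (h x t - h x t0) \<partial>Q) m \<le> 0"
                "0 \<le> rderiv (\<lambda>t. \<integral>x. (h x t - h x t0) \<partial>Q) m"
    and condB: "\<And>x. x \<noteq> 0 \<Longrightarrow> a x < b x \<and>
        (AE \<omega> in P. a x \<le> rderiv (h (X 1 \<omega>)) (m + x) \<and> rderiv (h (X 1 \<omega>)) (m + x) \<le> b x)"
    and a_lim: "\<exists>L. (a \<longlongrightarrow> L) (at_right 0)" "\<exists>L. (a \<longlongrightarrow> L) (at_left 0)"
    and b_lim: "\<exists>L. (b \<longlongrightarrow> L) (at_right 0)" "\<exists>L. (b \<longlongrightarrow> L) (at_left 0)"
    and c_pos: "c > 0" and \<delta>_pos: "\<delta> > 0"
    and growth: "\<And>x. x \<in> {-\<delta>..\<delta>} \<Longrightarrow>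
        \<bar>rderiv (\<lambda>t. \<integral>y. (h y t - h y t0) \<partial>Q) (m + x)\<bar> \<ge> c * \<bar>x\<bar>"
  shows "\<forall>\<gamma> r \<epsilon>. \<gamma> < 1/2 \<longrightarrow> r > 0 \<longrightarrow> \<epsilon> > 0 \<longrightarrow>
     summable (\<lambda>n::nat. real (Suc n) powr (r - 1) *
        measure P {\<omega> \<in> space P.
           (SUP k\<in>{Suc n..}. ereal (real (Suc n) powr \<gamma> * \<bar>mhat k \<omega> - m\<bar>)) > ereal \<epsilon>})"
proof -
  interpret S: setting Q P h t0 X mhat m c \<delta> a b
    by (rule setting.intro) (rule assms; assumption)+
  obtain \<eta> L where \<eta>L: "\<eta> > 0" "L > 0"
    "\<And>z. 0 < z \<Longrightarrow> z \<le> \<eta> \<Longrightarrow> b z - a z \<le> L \<and> b (-z) - a (-z) \<le> L"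
    using S.ab_bound[OF a_lim b_lim] by blast
  show ?thesis
    using S.main_sum[OF \<eta>L] by blast
qed

end
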